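(* Let $w\in S_n$. Then $|R(w)|=|B(w)|\cdot|C(w)|$ if and only if $|B(w)|=1$ or $|C(w)|=1$.
   Context: $S_n$ is generated by the adjacent transpositions $s_1,\dots,s_{n-1}$. A reduced word for $w$ is a word $i_1\cdots i_k$ with $w=s_{i_1}\cdots s_{i_k}$ and $k$ minimal; $R(w)$ is the set of reduced words. A braid move replaces a factor (consecutive letters) $i(i+1)i$ by $(i+1)i(i+1)$ or vice versa; a commutation move replaces a factor $ij$ with $|i-j|>1$ by $ji$. $B(w)$ (resp. $C(w)$) is the set of equivalence classes of $R(w)$ under sequences of braid moves (resp. commutation moves). *)

theory Defs
  imports "HOL-Combinatorics.Permutations"
begin

text \<open>Permutations in S_n are bijections of {1..n} (identity outside).\<close>

definition adj_transp :: "nat \<Rightarrow> nat \<Rightarrow> nat" where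
  "adj_transp i = transpose i (Suc i)"

definition word_prod :: "nat list \<Rightarrow> nat \<Rightarrow> nat" where
  "word_prod ws = foldr (\<lambda>i f. adj_transp i \<circ> f) ws id"

definition is_word :: "nat \<Rightarrow> nat list \<Rightarrow> bool" where
  "is_word n ws \<longleftrightarrow> set ws \<subseteq> {1..<n}"

definition reduced_words :: "nat \<Rightarrow> (nat \<Rightarrow> nat) \<Rightarrow> nat list set" where
  "reduced_words n w = {ws. is_word n ws \<and> word_prod ws = w \<and>
     (\<forall>vs. is_word n vs \<and> word_prod vs = w \<longrightarrow> length ws \<le> length vs)}"

definition braid_move :: "nat list \<Rightarrow> nat list \<Rightarrow> bool" where
  "braid_move xs ys \<longleftrightarrow> (\<exists>u v i.
     (xs = u @ [i, Suc i, i] @ v \<and> ys = u @ [Suc i, i, Suc i] @ v) \<or>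
     (xs = u @ [Suc i, i, Suc i] @ v \<and> ys = u @ [i, Suc i, i] @ v))"

definition comm_move :: "nat list \<Rightarrow> nat list \<Rightarrow> bool" where
  "comm_move xs ys \<longleftrightarrow> (\<exists>u v i j. (Suc i < j \<or> Suc j < i) \<and>
     xs = u @ [i, j] @ v \<and> ys = u @ [j, i] @ v)"

definition move_classes :: "(nat list \<Rightarrow> nat list \<Rightarrow> bool) \<Rightarrow> nat list set \<Rightarrow> nat list set set" where
  "move_classes mv R = R // {(x, y). x \<in> R \<and> y \<in> R \<and> mv\<^sup>*\<^sup>* x y}"

definition braid_classes :: "nat \<Rightarrow> (nat \<Rightarrow> nat) \<Rightarrow> nat list set set" where
  "braid_classes n w = move_classes braid_move (reduced_words n w)"

definition comm_classes :: "nat \<Rightarrow> (nat \<Rightarrow> nat) \<Rightarrow> nat list set set" where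
  "comm_classes n w = move_classes comm_move (reduced_words n w)"

end

theory Submission
  imports Defs
begin

abbreviation "sx \<equiv> adj_transp"
abbreviation "ee i \<equiv> {i, Suc i}"

definition commute :: "nat \<Rightarrow> nat \<Rightarrow> bool" where
  "commute a b \<longleftrightarrow> Suc a < b \<or> Suc b < a"

definition adjl :: "nat \<Rightarrow> nat \<Rightarrow> bool" where
  "adjl a b \<longleftrightarrow> b = Suc a \<or> a = Suc b"

lemma wp_Nil[simp]: "word_prod [] = id"
  by (simp add: word_prod_def)

lemma wp_Cons[simp]: "word_prod (i # xs) = sx i \<circ> word_prod xs"
  by (simp add: word_prod_def)

lemma wp_append[simp]: "word_prod (xs @ ys) = word_prod xs \<circ> word_prod ys"
  by (induction xs) auto

lemma bij_sx[simp]: "bij (sx i)"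
  by (simp add: adj_transp_def)

lemma inj_sx[simp]: "inj (sx i)"
  by (simp add: adj_transp_def)

lemma sx_sx[simp]: "sx i \<circ> sx i = id"
  by (simp add: adj_transp_def)

lemma sx_sx_apply[simp]: "sx i (sx i x) = x"
  by (simp add: adj_transp_def)

lemma bij_wp[simp]: "bij (word_prod xs)"
proof (induction xs)
  case Nil show ?case by (simp only: wp_Nil bij_id)
next
  case (Cons a xs) show ?case by (simp only: wp_Cons) (rule bij_comp[OF Cons.IH bij_sx])
qed

lemma inj_wp[simp]: "inj (word_prod xs)"
  using bij_wp bij_is_inj by blast

lemma sx_comm: "commute a b \<Longrightarrow> sx a \<circ> sx b = sx b \<circ> sx a"
  by (auto simp: commute_def adj_transp_def transpose_def fun_eq_iff)

lemma sx_braid: "sx i \<circ> sx (Suc i) \<circ> sx i = sx (Suc i) \<circ> sx i \<circ> sx (Suc i)"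
  by (auto simp: adj_transp_def transpose_def fun_eq_iff)

lemma sx_braid': "adjl A B \<Longrightarrow> sx A \<circ> sx B \<circ> sx A = sx B \<circ> sx A \<circ> sx B"
  using sx_braid by (auto simp: adjl_def)

lemma sx_fix: "commute a b \<Longrightarrow> sx a ` ee b = ee b"
  by (auto simp: commute_def adj_transp_def transpose_def)

lemma sx_ee_self[simp]: "sx a ` ee a = ee a"
  by (auto simp: adj_transp_def transpose_def)

lemma sx_adj: "adjl A B \<Longrightarrow> sx A ` (sx B ` ee A) = ee B"
  by (auto simp: adjl_def adj_transp_def transpose_def)

lemma ee_disj: "commute a b \<Longrightarrow> ee a \<inter> ee b = {}"
  by (auto simp: commute_def)

lemma ee_adj: "adjl a b \<Longrightarrow> ee a \<inter> ee b \<noteq> {}"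
  by (auto simp: adjl_def)

fun Tv :: "nat list \<Rightarrow> nat set list" where
  "Tv [] = []"
| "Tv (i # u) = ee i # map ((`) (sx i)) (Tv u)"

lemma Tv_append: "Tv (xs @ ys) = Tv xs @ map ((`) (word_prod xs)) (Tv ys)"
  by (induction xs) (auto simp: image_comp o_def)

lemma length_Tv[simp]: "length (Tv u) = length u"
  by (induction u) auto

lemma inj_img: "inj f \<Longrightarrow> inj ((`) f)"
  by (meson inj_image_eq_iff injI)

lemma ee_inj: "ee i = ee j \<Longrightarrow> i = j"
  by (auto simp: insert_eq_iff doubleton_eq_iff)

lemma Tv_inj: "Tv u = Tv v \<Longrightarrow> u = v"
proof (induction u arbitrary: v)
  case Nil then show ?case by (cases v) auto
next
  case (Cons a u)
  then obtain b v' where v: "v = b # v'" by (cases v) auto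
  with Cons.prems have "ee a = ee b" by simp
  hence ab: "a = b" by (rule ee_inj)
  with Cons.prems v have "map ((`) (sx a)) (Tv u) = map ((`) (sx a)) (Tv v')" by simp
  hence "Tv u = Tv v'" using inj_map_eq_map[OF inj_img[OF inj_sx]] by blast
  with Cons.IH ab v show ?case by simp
qed

fun bef :: "'a list \<Rightarrow> ('a \<times> 'a) set" where
  "bef [] = {}"
| "bef (x # xs) = Pair x ` set xs \<union> bef xs"

lemma bef_append: "bef (xs @ ys) = bef xs \<union> bef ys \<union> set xs \<times> set ys"
  by (induction xs) auto

lemma bef_sub: "bef xs \<subseteq> set xs \<times> set xs"
  by (induction xs) auto

lemma bef_map: "bef (map f xs) = map_prod f f ` bef xs"
  by (induction xs) auto

lemma bef_cycle: "distinct xs \<Longrightarrow> (a,b) \<in> bef xs \<Longrightarrow> (b,c) \<in> bef xs \<Longrightarrow> (c,a) \<in> bef xs \<Longrightarrow> False"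
proof (induction xs)
  case Nil then show ?case by simp
next
  case (Cons x xs)
  have nx: "x \<notin> set xs" using Cons.prems by simp
  have nn: "\<And>u. (u, x) \<notin> bef (x # xs)" using bef_sub[of xs] nx by auto
  have "a \<noteq> x" using nn Cons.prems(4) by blast
  moreover have "b \<noteq> x" using nn Cons.prems(2) by blast
  moreover have "c \<noteq> x" using nn Cons.prems(3) by blast
  ultimately have "(a,b) \<in> bef xs" "(b,c) \<in> bef xs" "(c,a) \<in> bef xs" using Cons.prems(2,3,4) by auto
  then show ?case using Cons by simp
qed

lemma bef_tail: "x \<notin> set xs \<Longrightarrow> bef xs = {p \<in> bef (x # xs). fst p \<noteq> x}"
  using bef_sub[of xs] by auto

lemma bef_eq_list: "distinct xs \<Longrightarrow> distinct ys \<Longrightarrow> set xs = set ys \<Longrightarrow> bef xs = bef ys \<Longrightarrow> xs = ys"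
proof (induction xs arbitrary: ys)
  case Nil then show ?case by simp
next
  case (Cons x xs)
  obtain y ys' where ys: "ys = y # ys'" using Cons.prems(3) by (cases ys) auto
  have "x = y"
  proof (rule ccontr)
    assume "x \<noteq> y"
    hence "x \<in> set ys'" using Cons.prems(3) ys by auto
    hence "(y, x) \<in> bef ys" using ys by simp
    hence "(y, x) \<in> bef (x # xs)" using Cons.prems(4) by simp
    moreover have "x \<notin> set xs" using Cons.prems(1) by simp
    ultimately show False using bef_sub[of xs] by auto
  qed
  have dx: "x \<notin> set xs" "x \<notin> set ys'" using Cons.prems(1,2) ys \<open>x = y\<close> by auto
  have s: "set xs = set ys'" using Cons.prems(3) ys \<open>x = y\<close> dx by auto
  have e: "bef (x # xs) = bef (x # ys')" using Cons.prems(4) ys \<open>x = y\<close> by simp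
  have "bef xs = bef ys'"
    using bef_tail[OF dx(1)] bef_tail[OF dx(2)] e by (simp del: bef.simps)
  moreover have "distinct xs" "distinct ys'" using Cons.prems(1,2) ys by auto
  ultimately show ?case using Cons.IH[of ys'] s ys \<open>x = y\<close> by simp
qed

definition Dis :: "(nat set \<times> nat set) set" where
  "Dis = {(s, t). s \<inter> t = {}}"

lemma bef_replace: "set M = set M' \<Longrightarrow> bef M \<inter> S = bef M' \<inter> S \<Longrightarrow>
   bef (L1 @ M @ L2) \<inter> S = bef (L1 @ M' @ L2) \<inter> S"
  by (simp add: bef_append Int_Un_distrib2)

lemma Tv_braid1: "Tv [i, Suc i, i] = [{i, Suc i}, {i, Suc (Suc i)}, {Suc i, Suc (Suc i)}]"
  by (simp add: adj_transp_def)

lemma Tv_braid2: "Tv [Suc i, i, Suc i] = [{Suc i, Suc (Suc i)}, {i, Suc (Suc i)}, {i, Suc i}]"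
  by (simp add: adj_transp_def insert_commute)

lemma Tv_mid: "Tv (x @ m @ y) = Tv x @ map ((`) (word_prod x)) (Tv m) @ map ((`) (word_prod x \<circ> word_prod m)) (Tv y)"
  by (simp add: Tv_append image_comp o_def)

lemma bef_map_S: assumes "\<And>a b. ((f a, f b) \<in> S) = ((a, b) \<in> S)"
  shows "bef (map f L) \<inter> S = map_prod f f ` (bef L \<inter> S)"
  using assms by (auto simp: bef_map)

lemma Dis_img: "inj X \<Longrightarrow> ((X ` a, X ` b) \<in> Dis) = ((a, b) \<in> Dis)"
  by (simp add: Dis_def image_Int[symmetric])

lemma Dis_img': "inj X \<Longrightarrow> ((X ` a, X ` b) \<in> - Dis) = ((a, b) \<in> - Dis)"
  using Dis_img by blast

lemma mid_inv:
  assumes wp: "word_prod m = word_prod m'" and st: "set (Tv m) = set (Tv m')"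
    and bS: "bef (Tv m) \<inter> S = bef (Tv m') \<inter> S"
    and inv: "\<And>a b. ((word_prod x ` a, word_prod x ` b) \<in> S) = ((a, b) \<in> S)"
  shows "bef (Tv (x @ m @ y)) \<inter> S = bef (Tv (x @ m' @ y)) \<inter> S \<and> set (Tv (x @ m @ y)) = set (Tv (x @ m' @ y))"
proof
  have b1: "bef (map ((`) (word_prod x)) (Tv m)) \<inter> S = bef (map ((`) (word_prod x)) (Tv m')) \<inter> S"
    using bef_map_S[of "(`) (word_prod x)" S, OF inv] bS by simp
  have s1: "set (map ((`) (word_prod x)) (Tv m)) = set (map ((`) (word_prod x)) (Tv m'))"
    using st by simp
  show "bef (Tv (x @ m @ y)) \<inter> S = bef (Tv (x @ m' @ y)) \<inter> S"
    unfolding Tv_mid wp by (rule bef_replace[OF s1 b1])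
  show "set (Tv (x @ m @ y)) = set (Tv (x @ m' @ y))"
    using st unfolding Tv_mid wp by simp
qed

lemma wp_braid: "word_prod [i, Suc i, i] = word_prod [Suc i, i, Suc i]"
  using sx_braid[of i] by (simp add: comp_assoc)

lemma braid_inv: assumes "braid_move u v"
  shows "bef (Tv u) \<inter> Dis = bef (Tv v) \<inter> Dis \<and> set (Tv u) = set (Tv v)"
proof -
  from assms obtain x y i where
    "(u = x @ [i, Suc i, i] @ y \<and> v = x @ [Suc i, i, Suc i] @ y) \<or>
     (u = x @ [Suc i, i, Suc i] @ y \<and> v = x @ [i, Suc i, i] @ y)"
    unfolding braid_move_def by blast
  moreover have st: "set (Tv [i, Suc i, i]) = set (Tv [Suc i, i, Suc i])"
    unfolding Tv_braid1 Tv_braid2 by auto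
  moreover have bS: "bef (Tv [i, Suc i, i]) \<inter> Dis = bef (Tv [Suc i, i, Suc i]) \<inter> Dis"
    unfolding Tv_braid1 Tv_braid2 by (auto simp: Dis_def)
  moreover have inv: "\<And>a b. ((word_prod x ` a, word_prod x ` b) \<in> Dis) = ((a, b) \<in> Dis)"
    by (rule Dis_img) simp
  ultimately show ?thesis
    using mid_inv[OF wp_braid st bS inv] mid_inv[OF wp_braid[symmetric] st[symmetric] bS[symmetric] inv]
    by metis
qed

lemma commute_sym: "commute a b \<Longrightarrow> commute b a"
  by (auto simp: commute_def)

lemma Tv_comm: "commute i j \<Longrightarrow> Tv [i, j] = [ee i, ee j]"
  using sx_fix by simp

lemma comm_inv: assumes "comm_move u v"
  shows "bef (Tv u) - Dis = bef (Tv v) - Dis \<and> set (Tv u) = set (Tv v)"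
proof -
  from assms obtain x y i j where c: "commute i j" and
    uv: "u = x @ [i, j] @ y" "v = x @ [j, i] @ y"
    unfolding comm_move_def commute_def by blast
  have wp: "word_prod [i, j] = word_prod [j, i]" using sx_comm[OF c] by simp
  have st: "set (Tv [i, j]) = set (Tv [j, i])"
    unfolding Tv_comm[OF c] Tv_comm[OF commute_sym[OF c]] by auto
  have bS: "bef (Tv [i, j]) \<inter> - Dis = bef (Tv [j, i]) \<inter> - Dis"
    unfolding Tv_comm[OF c] Tv_comm[OF commute_sym[OF c]] using ee_disj[OF c] by (auto simp: Dis_def)
  have inv: "\<And>a b. ((word_prod x ` a, word_prod x ` b) \<in> - Dis) = ((a, b) \<in> - Dis)"
    by (rule Dis_img') simp
  show ?thesis using mid_inv[OF wp st bS inv] uv by (simp add: Diff_eq)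
qed

lemma braid_star_inv: "braid_move\<^sup>*\<^sup>* u v \<Longrightarrow> bef (Tv u) \<inter> Dis = bef (Tv v) \<inter> Dis \<and> set (Tv u) = set (Tv v)"
  by (induction rule: rtranclp_induct) (auto dest: braid_inv)

lemma comm_star_inv: "comm_move\<^sup>*\<^sup>* u v \<Longrightarrow> bef (Tv u) - Dis = bef (Tv v) - Dis \<and> set (Tv u) = set (Tv v)"
  by (induction rule: rtranclp_induct) (auto dest: comm_inv)

lemma Tv_mem: "t \<in> set (Tv u) \<Longrightarrow> \<exists>x b y. u = x @ [b] @ y \<and> t = word_prod x ` ee b"
proof (induction u arbitrary: t)
  case Nil then show ?case by simp
next
  case (Cons c u)
  show ?case
  proof (cases "t = ee c")
    case True
    then show ?thesis by (rule_tac x="[]" in exI) auto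
  next
    case False
    with Cons.prems obtain t' where t': "t' \<in> set (Tv u)" "t = sx c ` t'" by auto
    from Cons.IH[OF t'(1)] obtain x b y where "u = x @ [b] @ y" "t' = word_prod x ` ee b" by blast
    with t'(2) show ?thesis
      by (rule_tac x="c # x" in exI) (auto simp: image_comp)
  qed
qed

lemma del_lemma: assumes "bij X" "X ` ee b = ee a" shows "sx a \<circ> X \<circ> sx b = X"
proof -
  have inj: "inj X" using assms(1) bij_is_inj by blast
  have ne: "X b \<noteq> X (Suc b)" using inj by (simp add: inj_eq)
  from assms(2) have c: "(X b = a \<and> X (Suc b) = Suc a) \<or> (X b = Suc a \<and> X (Suc b) = a)"
    by (auto simp: doubleton_eq_iff)
  show ?thesis
  proof (rule ext)
    fix z
    show "(sx a \<circ> X \<circ> sx b) z = X z"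
    proof (cases "z = b \<or> z = Suc b")
      case True
      with c show ?thesis by (auto simp: adj_transp_def)
    next
      case False
      hence "X z \<noteq> X b" "X z \<noteq> X (Suc b)" using inj by (auto simp: inj_eq)
      hence "X z \<noteq> a" "X z \<noteq> Suc a" using c by auto
      with False show ?thesis by (auto simp: adj_transp_def)
    qed
  qed
qed

lemma red_tail: assumes "a # u \<in> reduced_words n w" shows "u \<in> reduced_words n (word_prod u)"
proof -
  from assms have a: "a \<in> {1..<n}" and iu: "is_word n u" and wa: "word_prod (a # u) = w"
    and mn: "\<And>vs. is_word n vs \<Longrightarrow> word_prod vs = w \<Longrightarrow> length (a # u) \<le> length vs"
    by (auto simp: reduced_words_def is_word_def)
  have "length u \<le> length vs" if "is_word n vs" "word_prod vs = word_prod u" for vs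
    using mn[of "a # vs"] that a wa by (auto simp: is_word_def)
  with iu show ?thesis by (auto simp: reduced_words_def)
qed

lemma red_distinct: "u \<in> reduced_words n w \<Longrightarrow> distinct (Tv u)"
proof (induction u arbitrary: w)
  case Nil then show ?case by simp
next
  case (Cons a u)
  have d: "distinct (Tv u)" using Cons.IH[OF red_tail[OF Cons.prems]] .
  have dm: "distinct (map ((`) (sx a)) (Tv u))"
    using d by (simp add: distinct_map inj_on_subset[OF inj_img[OF inj_sx]])
  have "ee a \<notin> set (map ((`) (sx a)) (Tv u))"
  proof
    assume "ee a \<in> set (map ((`) (sx a)) (Tv u))"
    then obtain t where t: "t \<in> set (Tv u)" "ee a = sx a ` t" by auto
    have "sx a ` (sx a ` t) = t" by (simp add: image_comp)
    hence "sx a ` ee a = t" by (simp only: t(2))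
    hence "ee a \<in> set (Tv u)" using t(1) sx_ee_self[of a] by metis
    then obtain x b y where u: "u = x @ [b] @ y" "word_prod x ` ee b = ee a"
      using Tv_mem by blast
    have dl: "sx a \<circ> word_prod x \<circ> sx b = word_prod x" using del_lemma[OF bij_wp u(2)] .
    have "word_prod (a # u) = (sx a \<circ> word_prod x \<circ> sx b) \<circ> word_prod y"
      using u(1) by (simp add: comp_assoc)
    hence e: "word_prod (x @ y) = w" using dl Cons.prems by (simp add: reduced_words_def)
    have "is_word n (x @ y)" using Cons.prems u(1) by (auto simp: reduced_words_def is_word_def)
    with e Cons.prems have "length (a # u) \<le> length (x @ y)" by (auto simp: reduced_words_def)
    with u(1) show False by simp
  qed
  with d dm show ?case by simp
qed

lemma wp_mid: "word_prod (x @ m @ y) = word_prod x \<circ> word_prod m \<circ> word_prod y"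
  by (simp add: comp_assoc)

lemma braid_R: assumes "braid_move u v" "u \<in> reduced_words n w" shows "v \<in> reduced_words n w"
proof -
  have "\<exists>x y m m'. u = x @ m @ y \<and> v = x @ m' @ y \<and> word_prod m = word_prod m' \<and>
    length m = length m' \<and> set m = set m'"
  proof -
    from assms(1) obtain x y i where
      "(u = x @ [i, Suc i, i] @ y \<and> v = x @ [Suc i, i, Suc i] @ y) \<or>
       (u = x @ [Suc i, i, Suc i] @ y \<and> v = x @ [i, Suc i, i] @ y)"
      unfolding braid_move_def by blast
    thus ?thesis
    proof
      assume h: "u = x @ [i, Suc i, i] @ y \<and> v = x @ [Suc i, i, Suc i] @ y"
      show ?thesis by (rule exI[of _ x], rule exI[of _ y], rule exI[of _ "[i, Suc i, i]"],
         rule exI[of _ "[Suc i, i, Suc i]"]) (use h wp_braid[of i] in auto)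
    next
      assume h: "u = x @ [Suc i, i, Suc i] @ y \<and> v = x @ [i, Suc i, i] @ y"
      show ?thesis by (rule exI[of _ x], rule exI[of _ y], rule exI[of _ "[Suc i, i, Suc i]"],
         rule exI[of _ "[i, Suc i, i]"]) (use h wp_braid[of i] in auto)
    qed
  qed
  then obtain x y m m' where
    uv: "u = x @ m @ y" "v = x @ m' @ y" and wm: "word_prod m = word_prod m'" and
    lm: "length m = length m'" and sm: "set m = set m'" by blast
  have "word_prod u = word_prod v" using uv wm by (simp only: wp_mid)
  moreover have "length u = length v" "set u = set v" using uv lm sm by auto
  ultimately show ?thesis using assms(2) by (auto simp: reduced_words_def is_word_def)
qed

lemma comm_R: assumes "comm_move u v" "u \<in> reduced_words n w" shows "v \<in> reduced_words n w"
proof -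
  from assms(1) obtain x y i j where c: "commute i j" and
    uv: "u = x @ [i, j] @ y" "v = x @ [j, i] @ y"
    unfolding comm_move_def commute_def by blast
  have wp: "word_prod [i, j] = word_prod [j, i]" using sx_comm[OF c] by simp
  have "word_prod u = word_prod v" using uv wp by (simp only: wp_mid)
  moreover have "length u = length v" "set u = set v" using uv by auto
  ultimately show ?thesis using assms(2) by (auto simp: reduced_words_def is_word_def)
qed

lemma braid_star_R: "braid_move\<^sup>*\<^sup>* u v \<Longrightarrow> u \<in> reduced_words n w \<Longrightarrow> v \<in> reduced_words n w"
  by (induction rule: rtranclp_induct) (auto intro: braid_R)

lemma comm_star_R: "comm_move\<^sup>*\<^sup>* u v \<Longrightarrow> u \<in> reduced_words n w \<Longrightarrow> v \<in> reduced_words n w"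
  by (induction rule: rtranclp_induct) (auto intro: comm_R)

lemma noadj: "x @ [a, a] @ y \<notin> reduced_words n w"
proof
  assume "x @ [a, a] @ y \<in> reduced_words n w"
  hence "distinct (Tv (x @ [a, a] @ y))" by (rule red_distinct)
  moreover have e: "Tv [a, a] = [ee a, ee a]" by (simp only: Tv.simps list.map sx_ee_self)
  ultimately show False unfolding Tv_mid e by simp
qed

definition goodL :: "nat list set \<Rightarrow> bool" where
  "goodL S \<longleftrightarrow> (\<exists>x c A B y. x @ [c, A, B, A] @ y \<in> S \<and> commute c A \<and> adjl A B)"

definition goodR :: "nat list set \<Rightarrow> bool" where
  "goodR S \<longleftrightarrow> (\<exists>x c A B y. x @ [A, B, A, c] @ y \<in> S \<and> commute c A \<and> adjl A B)"

lemma nc_adj: "\<not> commute p q \<Longrightarrow> p \<noteq> q \<Longrightarrow> adjl p q"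
  by (auto simp: commute_def adjl_def)

lemma adjl_sym: "adjl a b \<Longrightarrow> adjl b a"
  by (auto simp: adjl_def)

lemma three_adj: "adjl b e \<Longrightarrow> adjl a e \<Longrightarrow> commute a b \<Longrightarrow> adjl e f \<Longrightarrow> f = a \<or> f = b"
  by (auto simp: adjl_def commute_def)

lemma gap_aux:
  assumes cl: "\<And>x a b y. x @ [a, b] @ y \<in> S \<Longrightarrow> commute a b \<Longrightarrow> x @ [b, a] @ y \<in> S"
    and na: "\<And>x a y. x @ [a, a] @ y \<notin> S"
  shows "\<forall>x a b. x @ [a, b] @ mid @ [A, B, A] @ y \<in> S \<longrightarrow> commute a b \<longrightarrow> adjl A B \<longrightarrow> goodL S"
proof (induction mid rule: length_induct)
  case (1 mid)
  show ?case
  proof (intro allI impI)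
    fix x a b
    assume u: "x @ [a, b] @ mid @ [A, B, A] @ y \<in> S" and cab: "commute a b" and AB: "adjl A B"
    show "goodL S"
    proof (cases mid)
      case Nil
      with u have u0: "x @ [a, b, A, B, A] @ y \<in> S" by simp
      show ?thesis
      proof (cases "commute b A")
        case True
        have "(x @ [a]) @ [b, A, B, A] @ y \<in> S" using u0 by simp
        with True AB show ?thesis unfolding goodL_def by blast
      next
        case False
        have "b \<noteq> A" using na[of "x @ [a]" b "[B, A] @ y"] u0 by auto
        with False have bA: "adjl b A" by (rule nc_adj)
        have u2: "x @ [b, a] @ [A, B, A] @ y \<in> S" using cl[of x a b "[A, B, A] @ y"] u0 cab by simp
        show ?thesis
        proof (cases "commute a A")
          case True
          have "(x @ [b]) @ [a, A, B, A] @ y \<in> S" using u2 by simp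
          with True AB show ?thesis unfolding goodL_def by blast
        next
          case False
          have "a \<noteq> A" using na[of "x @ [b]" a "[B, A] @ y"] u2 by auto
          with False have aA: "adjl a A" by (rule nc_adj)
          have "B = a \<or> B = b" using three_adj[OF bA aA cab AB] .
          then show ?thesis
          proof
            assume "B = b"
            hence "x @ [a, B, A, B] @ A # y \<in> S" "commute a B" using u0 cab by auto
            with adjl_sym[OF AB] show ?thesis unfolding goodL_def by blast
          next
            assume "B = a"
            hence "x @ [b, B, A, B] @ A # y \<in> S" "commute b B" using u2 cab commute_sym by auto
            with adjl_sym[OF AB] show ?thesis unfolding goodL_def by blast
          qed
        qed
      qed
    next
      case (Cons e mid')
      with u have u1: "x @ [a, b, e] @ mid' @ [A, B, A] @ y \<in> S" by simp
      have IH: "\<And>x a b. length mid' < length mid \<Longrightarrow> x @ [a, b] @ mid' @ [A, B, A] @ y \<in> S \<Longrightarrow>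
          commute a b \<Longrightarrow> goodL S" using 1 AB by blast
      have lt: "length mid' < length mid" using Cons by simp
      show ?thesis
      proof (cases "commute b e")
        case True
        have "(x @ [a]) @ [b, e] @ mid' @ [A, B, A] @ y \<in> S" using u1 by simp
        from IH[OF lt this True] show ?thesis .
      next
        case False
        have "b \<noteq> e" using na[of "x @ [a]" b "mid' @ [A, B, A] @ y"] u1 by auto
        with False have be: "adjl b e" by (rule nc_adj)
        have u2: "x @ [b, a] @ e # mid' @ [A, B, A] @ y \<in> S"
          using cl[of x a b "e # mid' @ [A, B, A] @ y"] u1 cab by simp
        show ?thesis
        proof (cases "commute a e")
          case True
          have "(x @ [b]) @ [a, e] @ mid' @ [A, B, A] @ y \<in> S" using u2 by simp
          from IH[OF lt this True] show ?thesis .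
        next
          case False
          have "a \<noteq> e" using na[of "x @ [b]" a "mid' @ [A, B, A] @ y"] u2 by auto
          with False have ae: "adjl a e" by (rule nc_adj)
          obtain f rest where fr: "mid' @ [A, B, A] @ y = f # rest" by (cases mid') auto
          have u1': "x @ [a, b, e, f] @ rest \<in> S" using u1 fr by simp
          have u2': "x @ [b, a, e, f] @ rest \<in> S" using u2 fr by simp
          show ?thesis
          proof (cases "commute e f")
            case True
            show ?thesis
            proof (cases mid')
              case Nil
              with fr have "f = A" "rest = [B, A] @ y" by auto
              hence "(x @ [a, b]) @ [e, A, B, A] @ y \<in> S" using u1' by simp
              with True \<open>f = A\<close> AB show ?thesis unfolding goodL_def by blast
            next
              case (Cons f' mid'')
              with fr have ff: "f' = f" "rest = mid'' @ [A, B, A] @ y" by auto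
              have "(x @ [a, b]) @ [e, f] @ mid'' @ [A, B, A] @ y \<in> S" using u1' ff by simp
              moreover have "length mid'' < length mid" using Cons \<open>mid = e # mid'\<close> by simp
              ultimately show ?thesis using 1[rule_format, of mid'' "x @ [a, b]" e f] True AB by blast
            qed
          next
            case False
            have "e \<noteq> f" using na[of "x @ [a, b]" e rest] u1' by auto
            with False have ef: "adjl e f" by (rule nc_adj)
            have "f = a \<or> f = b" using three_adj[OF be ae cab ef] .
            then show ?thesis
            proof
              assume "f = b"
              hence "x @ [a, b, e, b] @ rest \<in> S" using u1' by simp
              with cab be show ?thesis unfolding goodL_def by blast
            next
              assume "f = a"
              hence "x @ [b, a, e, a] @ rest \<in> S" using u2' by simp
              with commute_sym[OF cab] ae show ?thesis unfolding goodL_def by blast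
            qed
          qed
        qed
      qed
    qed
  qed
qed

lemma gapL:
  assumes cl: "\<And>x a b y. x @ [a, b] @ y \<in> S \<Longrightarrow> commute a b \<Longrightarrow> x @ [b, a] @ y \<in> S"
    and na: "\<And>x a y. x @ [a, a] @ y \<notin> S"
    and "x @ [a, b] @ mid @ [A, B, A] @ y \<in> S" "commute a b" "adjl A B"
  shows "goodL S"
  using gap_aux[OF cl na, of mid A B y] assms(3-5) by blast

lemma gapR:
  assumes cl: "\<And>x a b y. x @ [a, b] @ y \<in> S \<Longrightarrow> commute a b \<Longrightarrow> x @ [b, a] @ y \<in> S"
    and na: "\<And>x a y. x @ [a, a] @ y \<notin> S"
    and u: "x @ [A, B, A] @ mid @ [a, b] @ y \<in> S" and cab: "commute a b" and AB: "adjl A B"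
  shows "goodR S"
proof -
  have cl': "x @ [b, a] @ y \<in> rev ` S" if "x @ [a, b] @ y \<in> rev ` S" "commute a b" for x a b y
  proof -
    from that(1) have "rev y @ [b, a] @ rev x \<in> S" by (auto simp: image_iff) (metis append.assoc rev_append rev_rev_ident rev_singleton_conv rev.simps(2))
    hence "rev y @ [a, b] @ rev x \<in> S" using cl commute_sym[OF that(2)] by blast
    hence "rev (rev y @ [a, b] @ rev x) \<in> rev ` S" by blast
    thus ?thesis by simp
  qed
  have na': "x @ [a, a] @ y \<notin> rev ` S" for x a y
  proof
    assume "x @ [a, a] @ y \<in> rev ` S"
    then obtain v where "v \<in> S" "x @ [a, a] @ y = rev v" by blast
    hence "rev y @ [a, a] @ rev x \<in> S" by (metis append.assoc rev_append rev_rev_ident rev_singleton_conv rev.simps(2))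
    with na show False by blast
  qed
  have "rev y @ [b, a] @ rev mid @ [A, B, A] @ rev x \<in> rev ` S"
  proof -
    have "rev (x @ [A, B, A] @ mid @ [a, b] @ y) \<in> rev ` S" using u by blast
    thus ?thesis by simp
  qed
  from gapL[OF cl' na' this commute_sym[OF cab] AB]
  obtain x' c A' B' y' where g: "x' @ [c, A', B', A'] @ y' \<in> rev ` S" "commute c A'" "adjl A' B'"
    unfolding goodL_def by blast
  from g(1) obtain v where "v \<in> S" "x' @ [c, A', B', A'] @ y' = rev v" by blast
  hence "rev y' @ [A', B', A', c] @ rev x' \<in> S" by (metis rev_append rev_rev_ident append.assoc rev.simps)
  with g(2,3) show ?thesis unfolding goodR_def by blast
qed

lemma bef_mid: "bef (map ((`) (word_prod x)) (Tv m)) \<subseteq> bef (Tv (x @ m @ y))"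
  unfolding Tv_mid bef_append by blast

lemma bef4: "(a1, a2) \<in> bef [a1, a2, a3, a4]" "(a1, a3) \<in> bef [a1, a2, a3, a4]"
  "(a1, a4) \<in> bef [a1, a2, a3, a4]" "(a2, a3) \<in> bef [a1, a2, a3, a4]"
  "(a2, a4) \<in> bef [a1, a2, a3, a4]" "(a3, a4) \<in> bef [a1, a2, a3, a4]"
  by auto

lemma mixed:
  assumes dz: "distinct (Tv z)"
    and e2: "bef (Tv W2) \<inter> Dis = bef (Tv z) \<inter> Dis"
    and e3: "bef (Tv W3) - Dis = bef (Tv z) - Dis"
    and "(a, b) \<in> bef (Tv W2) \<inter> Dis \<union> (bef (Tv W3) - Dis)"
    and "(b, c) \<in> bef (Tv W2) \<inter> Dis \<union> (bef (Tv W3) - Dis)"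
    and "(c, a) \<in> bef (Tv W2) \<inter> Dis \<union> (bef (Tv W3) - Dis)"
  shows False
proof -
  have "bef (Tv W2) \<inter> Dis \<union> (bef (Tv W3) - Dis) \<subseteq> bef (Tv z)" using e2 e3 by blast
  with assms(4-6) have "(a, b) \<in> bef (Tv z)" "(b, c) \<in> bef (Tv z)" "(c, a) \<in> bef (Tv z)" by blast+
  with bef_cycle[OF dz] show False by blast
qed

lemma both: "p \<in> bef L2 \<Longrightarrow> p \<in> bef L3 \<Longrightarrow> p \<in> bef L2 \<inter> Dis \<union> (bef L3 - Dis)"
  by blast

lemma conflictL:
  assumes cA: "commute c A" and AB: "adjl A B" and dz: "distinct (Tv z)"
    and b2: "braid_move\<^sup>*\<^sup>* (x @ [A, c, B, A] @ y) z"
    and c3: "comm_move\<^sup>*\<^sup>* (x @ [c, B, A, B] @ y) z"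
  shows False
proof -
  define X where "X = word_prod x"
  have Ac: "commute A c" using commute_sym[OF cA] .
  have f1: "sx A ` ee c = ee c" using sx_fix[OF Ac] .
  have f2: "sx A ` (sx c ` (sx B ` ee A)) = sx c ` ee B"
  proof -
    have "sx A ` (sx c ` (sx B ` ee A)) = sx c ` (sx A ` (sx B ` ee A))"
      using sx_comm[OF Ac] by (metis image_comp)
    also have "\<dots> = sx c ` ee B" by (simp only: sx_adj[OF AB])
    finally show ?thesis .
  qed
  have T2: "Tv [A, c, B, A] = [ee A, ee c, sx A ` (sx c ` ee B), sx c ` ee B]"
    by (simp only: Tv.simps list.map f1 f2)
  have g1: "sx B ` (sx A ` ee B) = ee A" using sx_adj[OF adjl_sym[OF AB]] .
  have g2: "sx c ` ee A = ee A" using sx_fix[OF cA] .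
  have T3: "Tv [c, B, A, B] = [ee c, sx c ` ee B, sx c ` (sx B ` ee A), ee A]"
    by (simp only: Tv.simps list.map g1 g2)
  have s2: "bef [X ` ee A, X ` ee c, X ` (sx A ` (sx c ` ee B)), X ` (sx c ` ee B)] \<subseteq> bef (Tv (x @ [A, c, B, A] @ y))"
    using bef_mid[of x "[A, c, B, A]" y, unfolded T2 list.map] unfolding X_def .
  have s3: "bef [X ` ee c, X ` (sx c ` ee B), X ` (sx c ` (sx B ` ee A)), X ` ee A] \<subseteq> bef (Tv (x @ [c, B, A, B] @ y))"
    using bef_mid[of x "[c, B, A, B]" y, unfolded T3 list.map] unfolding X_def .
  have injX: "inj X" unfolding X_def by simp
  have injXc: "inj (X \<circ> sx c)" using injX inj_sx by (blast intro: inj_compose)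
  have "(ee A, ee c) \<in> Dis" using ee_disj[OF Ac] by (simp add: Dis_def)
  hence d1: "(X ` ee A, X ` ee c) \<in> Dis" using Dis_img[OF injX] by blast
  have "(ee B, ee A) \<notin> Dis" using ee_adj[OF AB] by (auto simp: Dis_def)
  hence "((X \<circ> sx c) ` ee B, (X \<circ> sx c) ` ee A) \<notin> Dis" using Dis_img[OF injXc] by blast
  hence d3: "(X ` (sx c ` ee B), X ` ee A) \<notin> Dis" using g2 by (metis image_comp)
  show False
  proof (rule mixed[OF dz braid_star_inv[OF b2, THEN conjunct1] comm_star_inv[OF c3, THEN conjunct1]])
    show "(X ` ee A, X ` ee c) \<in> bef (Tv (x @ [A, c, B, A] @ y)) \<inter> Dis \<union> (bef (Tv (x @ [c, B, A, B] @ y)) - Dis)"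
      using subsetD[OF s2 bef4(1)] d1 by blast
    show "(X ` ee c, X ` (sx c ` ee B)) \<in> bef (Tv (x @ [A, c, B, A] @ y)) \<inter> Dis \<union> (bef (Tv (x @ [c, B, A, B] @ y)) - Dis)"
      by (rule both[OF subsetD[OF s2 bef4(5)] subsetD[OF s3 bef4(1)]])
    show "(X ` (sx c ` ee B), X ` ee A) \<in> bef (Tv (x @ [A, c, B, A] @ y)) \<inter> Dis \<union> (bef (Tv (x @ [c, B, A, B] @ y)) - Dis)"
      using subsetD[OF s3 bef4(5)] d3 by blast
  qed
qed

lemma conflictR:
  assumes cA: "commute c A" and AB: "adjl A B" and dz: "distinct (Tv z)"
    and b2: "braid_move\<^sup>*\<^sup>* (x @ [A, B, c, A] @ y) z"
    and c3: "comm_move\<^sup>*\<^sup>* (x @ [B, A, B, c] @ y) z"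
  shows False
proof -
  define X where "X = word_prod x"
  have Ac: "commute A c" using commute_sym[OF cA] .
  have f1: "sx A ` (sx B ` (sx c ` ee A)) = ee B"
    using sx_fix[OF cA] sx_adj[OF AB] by simp
  have T2: "Tv [A, B, c, A] = [ee A, sx A ` ee B, sx A ` (sx B ` ee c), ee B]"
    by (simp only: Tv.simps list.map f1)
  have g1: "sx B ` (sx A ` ee B) = ee A" using sx_adj[OF adjl_sym[OF AB]] .
  have g2: "sx B ` (sx A ` (sx B ` ee c)) = sx A ` (sx B ` ee c)"
  proof -
    have "sx B ` (sx A ` (sx B ` ee c)) = (sx B \<circ> sx A \<circ> sx B) ` ee c" by (simp only: image_comp comp_assoc)
    also have "\<dots> = (sx A \<circ> sx B \<circ> sx A) ` ee c" using sx_braid'[OF AB] by simp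
    also have "\<dots> = sx A ` (sx B ` (sx A ` ee c))" by (simp only: image_comp comp_assoc)
    also have "\<dots> = sx A ` (sx B ` ee c)" by (simp only: sx_fix[OF Ac])
    finally show ?thesis .
  qed
  have T3: "Tv [B, A, B, c] = [ee B, sx B ` ee A, ee A, sx A ` (sx B ` ee c)]"
    by (simp only: Tv.simps list.map g1 g2)
  have s2: "bef [X ` ee A, X ` (sx A ` ee B), X ` (sx A ` (sx B ` ee c)), X ` ee B] \<subseteq> bef (Tv (x @ [A, B, c, A] @ y))"
    using bef_mid[of x "[A, B, c, A]" y, unfolded T2 list.map] unfolding X_def .
  have s3: "bef [X ` ee B, X ` (sx B ` ee A), X ` ee A, X ` (sx A ` (sx B ` ee c))] \<subseteq> bef (Tv (x @ [B, A, B, c] @ y))"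
    using bef_mid[of x "[B, A, B, c]" y, unfolded T3 list.map] unfolding X_def .
  have injX: "inj X" unfolding X_def by simp
  have injF: "inj (X \<circ> sx A \<circ> sx B)" using injX inj_sx by (blast intro: inj_compose)
  have "(ee c, ee A) \<in> Dis" using ee_disj[OF cA] by (simp add: Dis_def)
  hence "((X \<circ> sx A \<circ> sx B) ` ee c, (X \<circ> sx A \<circ> sx B) ` ee A) \<in> Dis" using Dis_img[OF injF] by blast
  moreover have "sx A ` (sx B ` ee A) = ee B" using sx_adj[OF AB] .
  ultimately have d1: "(X ` (sx A ` (sx B ` ee c)), X ` ee B) \<in> Dis" by (metis image_comp)
  have "(ee B, ee A) \<notin> Dis" using ee_adj[OF AB] by (auto simp: Dis_def)
  hence d3: "(X ` ee B, X ` ee A) \<notin> Dis" using Dis_img[OF injX] by blast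
  show False
  proof (rule mixed[OF dz braid_star_inv[OF b2, THEN conjunct1] comm_star_inv[OF c3, THEN conjunct1]])
    show "(X ` (sx A ` (sx B ` ee c)), X ` ee B) \<in> bef (Tv (x @ [A, B, c, A] @ y)) \<inter> Dis \<union> (bef (Tv (x @ [B, A, B, c] @ y)) - Dis)"
      using subsetD[OF s2 bef4(6)] d1 by blast
    show "(X ` ee B, X ` ee A) \<in> bef (Tv (x @ [A, B, c, A] @ y)) \<inter> Dis \<union> (bef (Tv (x @ [B, A, B, c] @ y)) - Dis)"
      using subsetD[OF s3 bef4(2)] d3 by blast
    show "(X ` ee A, X ` (sx A ` (sx B ` ee c))) \<in> bef (Tv (x @ [A, B, c, A] @ y)) \<inter> Dis \<union> (bef (Tv (x @ [B, A, B, c] @ y)) - Dis)"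
      by (rule both[OF subsetD[OF s2 bef4(2)] subsetD[OF s3 bef4(6)]])
  qed
qed

lemma nc_both: "commute p q \<Longrightarrow> adjl p q \<Longrightarrow> False"
  by (auto simp: commute_def adjl_def)

lemma decomp:
  assumes e: "x1 @ [a, b] @ y1 = x2 @ [A, B, A] @ y2" and cab: "commute a b" and AB: "adjl A B"
  shows "(\<exists>mid. x2 = x1 @ [a, b] @ mid) \<or> (x2 = x1 @ [a] \<and> b = A) \<or>
         (x1 = x2 @ [A, B] \<and> a = A) \<or> (\<exists>mid. x1 = x2 @ [A, B, A] @ mid)"
proof -
  from e obtain us where
    "(x1 = x2 @ us \<and> us @ [a, b] @ y1 = [A, B, A] @ y2) \<or> (x1 @ us = x2 \<and> [a, b] @ y1 = us @ [A, B, A] @ y2)"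
    using append_eq_append_conv2[of x1 "[a, b] @ y1" x2 "[A, B, A] @ y2"] by blast
  then show ?thesis
  proof
    assume h: "x1 = x2 @ us \<and> us @ [a, b] @ y1 = [A, B, A] @ y2"
    show ?thesis
    proof (cases us)
      case Nil
      with h have "a = A" "b = B" by auto
      with cab AB nc_both show ?thesis by blast
    next
      case (Cons p us1)
      show ?thesis
      proof (cases us1)
        case Nil
        with h Cons have "a = B" "b = A" by auto
        with cab AB nc_both[of B A] adjl_sym show ?thesis by blast
      next
        case (Cons q us2)
        show ?thesis
        proof (cases us2)
          case Nil
          with h Cons \<open>us = p # us1\<close> show ?thesis by auto
        next
          case (Cons r us3)
          with h \<open>us1 = q # us2\<close> \<open>us = p # us1\<close> show ?thesis by auto
        qed
      qed
    qed
  next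
    assume h: "x1 @ us = x2 \<and> [a, b] @ y1 = us @ [A, B, A] @ y2"
    show ?thesis
    proof (cases us)
      case Nil
      with h have "a = A" "b = B" by auto
      with cab AB nc_both show ?thesis by blast
    next
      case (Cons p us1)
      show ?thesis
      proof (cases us1)
        case Nil
        with h Cons show ?thesis by auto
      next
        case (Cons q us2)
        with h \<open>us = p # us1\<close> show ?thesis by auto
      qed
    qed
  qed
qed

lemma sx_trans_step: "a < b \<Longrightarrow> sx b \<circ> transpose a b \<circ> sx b = transpose a (Suc b)"
  by (auto simp: adj_transp_def transpose_def fun_eq_iff)

lemma tw: "1 \<le> a \<Longrightarrow> a < b \<Longrightarrow> b \<le> n \<Longrightarrow> \<exists>ws. is_word n ws \<and> word_prod ws = transpose a b"
proof (induction b)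
  case 0 then show ?case by simp
next
  case (Suc b)
  show ?case
  proof (cases "a = b")
    case True
    with Suc.prems show ?thesis
      by (rule_tac x="[a]" in exI) (auto simp: is_word_def adj_transp_def)
  next
    case False
    with Suc.prems have ab: "a < b" by simp
    with Suc.IH Suc.prems obtain ws where ws: "is_word n ws" "word_prod ws = transpose a b" by auto
    have "is_word n ([b] @ ws @ [b])" using ws(1) ab Suc.prems by (auto simp: is_word_def)
    moreover have "word_prod ([b] @ ws @ [b]) = transpose a (Suc b)"
      using sx_trans_step[OF ab] ws(2) by (simp add: comp_assoc)
    ultimately show ?thesis by blast
  qed
qed

lemma ex_word: assumes "w permutes {1..n}" shows "\<exists>ws. is_word n ws \<and> word_prod ws = w"
  using assms finite_atLeastAtMost[of 1 n]
proof (induction rule: permutes_induct)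
  case id
  show ?case by (rule exI[of _ "[]"]) (simp add: is_word_def)
next
  case (swap a b p)
  then obtain ws where ws: "is_word n ws" "word_prod ws = p" by blast
  have "transpose a b = transpose (min a b) (max a b)"
    by (cases "a \<le> b") (auto simp: min_def max_def transpose_commute)
  moreover have "1 \<le> min a b" "min a b < max a b" "max a b \<le> n" using swap.hyps by auto
  then obtain ws1 where "is_word n ws1" "word_prod ws1 = transpose (min a b) (max a b)"
    using tw[of "min a b" "max a b" n] by blast
  ultimately have "is_word n (ws1 @ ws) \<and> word_prod (ws1 @ ws) = transpose a b \<circ> p"
    using ws by (auto simp: is_word_def)
  then show ?case by blast
qed

lemma R_nonempty: assumes "w permutes {1..n}" shows "reduced_words n w \<noteq> {}"
proof -
  let ?P = "\<lambda>l. \<exists>ws. is_word n ws \<and> word_prod ws = w \<and> length ws = l"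
  from ex_word[OF assms] have ex: "\<exists>l. ?P l" by blast
  obtain ws where ws: "is_word n ws" "word_prod ws = w" "length ws = (LEAST l. ?P l)"
    using LeastI_ex[OF ex] by blast
  have "length ws \<le> length vs" if "is_word n vs" "word_prod vs = w" for vs
    using ws(3) Least_le[of ?P "length vs"] that by auto
  with ws have "ws \<in> reduced_words n w" by (auto simp: reduced_words_def)
  thus ?thesis by blast
qed

lemma R_finite: "finite (reduced_words n w)"
proof (cases "reduced_words n w = {}")
  case True then show ?thesis by simp
next
  case False
  then obtain ws0 where w0: "ws0 \<in> reduced_words n w" by blast
  have "reduced_words n w \<subseteq> {xs. set xs \<subseteq> {1..<n} \<and> length xs = length ws0}"
  proof
    fix ws assume "ws \<in> reduced_words n w"
    with w0 show "ws \<in> {xs. set xs \<subseteq> {1..<n} \<and> length xs = length ws0}"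
      unfolding reduced_words_def is_word_def by (auto intro: antisym)
  qed
  moreover have "finite {xs. set xs \<subseteq> {1..<n::nat} \<and> length xs = length ws0}"
    by (rule finite_lists_length_eq) simp
  ultimately show ?thesis by (rule finite_subset)
qed

definition EE :: "(nat list \<Rightarrow> nat list \<Rightarrow> bool) \<Rightarrow> nat list set \<Rightarrow> (nat list \<times> nat list) set" where
  "EE mv R = {(x, y). x \<in> R \<and> y \<in> R \<and> mv\<^sup>*\<^sup>* x y}"

lemma sym_star: assumes "\<And>x y. mv x y \<Longrightarrow> mv y x" shows "mv\<^sup>*\<^sup>* x y \<Longrightarrow> mv\<^sup>*\<^sup>* y x"
proof (induction rule: rtranclp_induct)
  case base then show ?case by simp
next
  case (step y z)
  then show ?case using assms by (metis converse_rtranclp_into_rtranclp)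
qed

lemma equiv_EE: assumes "\<And>x y. mv x y \<Longrightarrow> mv y x" shows "equiv R (EE mv R)"
proof (rule equivI)
  show "EE mv R \<subseteq> R \<times> R" by (auto simp: EE_def)
  show "refl_on R (EE mv R)" by (auto simp: refl_on_def EE_def)
  show "sym (EE mv R)" using sym_star[of mv, OF assms] by (auto simp: sym_def EE_def)
  show "trans (EE mv R)" by (auto simp: trans_def EE_def)
qed

lemma braid_sym: "braid_move x y \<Longrightarrow> braid_move y x"
  unfolding braid_move_def by blast

lemma comm_sym: "comm_move x y \<Longrightarrow> comm_move y x"
  unfolding comm_move_def by blast

lemma sum_le1_eq:
  fixes g :: "'i \<Rightarrow> nat"
  assumes "finite I" "\<forall>i\<in>I. g i \<le> 1"
  shows "sum g I = card I \<longleftrightarrow> (\<forall>i\<in>I. g i = 1)"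
proof
  assume h: "sum g I = card I"
  show "\<forall>i\<in>I. g i = 1"
  proof (rule ccontr)
    assume "\<not> (\<forall>i\<in>I. g i = 1)"
    then obtain i where "i \<in> I" "g i < 1" using assms(2) by fastforce
    hence "sum g I < sum (\<lambda>_. 1) I" using assms by (intro sum_strict_mono_ex1) auto
    with h show False by simp
  qed
next
  assume "\<forall>i\<in>I. g i = 1"
  thus "sum g I = card I" by simp
qed

lemma count_classes:
  assumes fin: "finite R" and eB: "equiv R EB" and eC: "equiv R EC"
    and le1: "\<forall>b\<in>R//EB. \<forall>c\<in>R//EC. card (b \<inter> c) \<le> 1"
  shows "card R = card (R//EB) * card (R//EC) \<longleftrightarrow> (\<forall>b\<in>R//EB. \<forall>c\<in>R//EC. b \<inter> c \<noteq> {})"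
proof -
  let ?I = "(R//EB) \<times> (R//EC)"
  let ?f = "\<lambda>p. fst p \<inter> snd p"
  have fB: "finite (R//EB)" using finite_quotient[OF fin equiv_type[OF eB]] .
  have fC: "finite (R//EC)" using finite_quotient[OF fin equiv_type[OF eC]] .
  have fI: "finite ?I" using fB fC by simp
  have U: "R = \<Union>(?f ` ?I)"
  proof
    show "R \<subseteq> \<Union>(?f ` ?I)"
    proof
      fix x assume x: "x \<in> R"
      have "(EB``{x}, EC``{x}) \<in> ?I" using x by (simp add: quotientI)
      moreover have "x \<in> ?f (EB``{x}, EC``{x})"
        using equiv_class_self[OF eB x] equiv_class_self[OF eC x] by simp
      ultimately show "x \<in> \<Union>(?f ` ?I)" by blast
    qed
    show "\<Union>(?f ` ?I) \<subseteq> R" using in_quotient_imp_subset[OF eB] by fastforce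
  qed
  have fin_f: "\<forall>i\<in>?I. finite (?f i)" using in_quotient_imp_subset[OF eB] fin
    by (auto intro: finite_subset)
  have disj: "\<forall>i\<in>?I. \<forall>j\<in>?I. i \<noteq> j \<longrightarrow> ?f i \<inter> ?f j = {}"
  proof (intro ballI impI)
    fix i j assume i: "i \<in> ?I" and j: "j \<in> ?I" and ij: "i \<noteq> j"
    then have "fst i \<noteq> fst j \<or> snd i \<noteq> snd j" by (metis prod.expand)
    then show "?f i \<inter> ?f j = {}"
    proof
      assume "fst i \<noteq> fst j"
      hence "fst i \<inter> fst j = {}" using quotient_disj[OF eB] i j by (metis SigmaE fst_conv)
      thus ?thesis by blast
    next
      assume "snd i \<noteq> snd j"
      hence "snd i \<inter> snd j = {}" using quotient_disj[OF eC] i j by (metis SigmaE snd_conv)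
      thus ?thesis by blast
    qed
  qed
  have cR: "card R = (\<Sum>i\<in>?I. card (?f i))"
    using card_UN_disjoint[OF fI fin_f disj] U by simp
  have le: "\<forall>i\<in>?I. card (?f i) \<le> 1" using le1 by auto
  have "card R = card ?I \<longleftrightarrow> (\<forall>i\<in>?I. card (?f i) = 1)"
    unfolding cR by (rule sum_le1_eq[OF fI le])
  also have "\<dots> \<longleftrightarrow> (\<forall>b\<in>R//EB. \<forall>c\<in>R//EC. b \<inter> c \<noteq> {})"
  proof -
    have "card (?f i) = 1 \<longleftrightarrow> ?f i \<noteq> {}" if "i \<in> ?I" for i
      using le that fin_f
      by (metis One_nat_def card.empty card_0_eq le_SucE le_zero_eq zero_neq_one)
    thus ?thesis by auto
  qed
  finally show ?thesis by (simp add: card_cartesian_product)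
qed

lemma braid_of_adj: "adjl A B \<Longrightarrow> braid_move (x @ [A, B, A] @ y) (x @ [B, A, B] @ y)"
  unfolding adjl_def braid_move_def by blast

lemma comm_of: "commute a b \<Longrightarrow> comm_move (x @ [a, b] @ y) (x @ [b, a] @ y)"
  unfolding commute_def comm_move_def by blast

lemma braid_adj: "braid_move u v \<Longrightarrow> \<exists>x A B y. u = x @ [A, B, A] @ y \<and> adjl A B"
  unfolding adjl_def braid_move_def by blast

lemma comm_adj: "comm_move u v \<Longrightarrow> \<exists>x a b y. u = x @ [a, b] @ y \<and> commute a b"
  unfolding commute_def comm_move_def by blast

lemma inter_le1:
  assumes R: "R = reduced_words n w" and b: "b \<in> R // EE braid_move R" and c: "c \<in> R // EE comm_move R"
  shows "card (b \<inter> c) \<le> 1"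
proof -
  have eB: "equiv R (EE braid_move R)" by (rule equiv_EE) (rule braid_sym)
  have eC: "equiv R (EE comm_move R)" by (rule equiv_EE) (rule comm_sym)
  have fin: "finite (b \<inter> c)"
    using in_quotient_imp_subset[OF eB b] R_finite[of n w] R by (blast intro: finite_subset)
  have "u = v" if u: "u \<in> b \<inter> c" and v: "v \<in> b \<inter> c" for u v
  proof -
    have "(u, v) \<in> EE braid_move R" using in_quotient_imp_in_rel[OF eB b] u v by blast
    hence bu: "braid_move\<^sup>*\<^sup>* u v" and uR: "u \<in> R" and vR: "v \<in> R" by (auto simp: EE_def)
    have "(u, v) \<in> EE comm_move R" using in_quotient_imp_in_rel[OF eC c] u v by blast
    hence cu: "comm_move\<^sup>*\<^sup>* u v" by (auto simp: EE_def)
    have "bef (Tv u) = bef (Tv v)"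
      using braid_star_inv[OF bu] comm_star_inv[OF cu] by blast
    moreover have "set (Tv u) = set (Tv v)" using braid_star_inv[OF bu] by blast
    moreover have "distinct (Tv u)" using uR R red_distinct by blast
    moreover have "distinct (Tv v)" using vR R red_distinct by blast
    ultimately have "Tv u = Tv v" using bef_eq_list by blast
    thus "u = v" by (rule Tv_inj)
  qed
  thus ?thesis using card_le_Suc0_iff_eq[OF fin] by auto
qed

lemma two_elems: assumes "finite A" "A \<noteq> {}" "card A \<noteq> 1" shows "\<exists>a1\<in>A. \<exists>a2\<in>A. a1 \<noteq> a2"
proof (rule ccontr)
  assume "\<not> (\<exists>a1\<in>A. \<exists>a2\<in>A. a1 \<noteq> a2)"
  hence "card A \<le> Suc 0" using card_le_Suc0_iff_eq[OF assms(1)] by blast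
  moreover have "card A \<noteq> 0" using assms(1,2) by simp
  ultimately show False using assms(3) by linarith
qed

theorem proposition4p8:
  fixes n :: nat and w :: "nat \<Rightarrow> nat"
  assumes "w permutes {1..n}"
  shows "card (reduced_words n w) = card (braid_classes n w) * card (comm_classes n w)
     \<longleftrightarrow> card (braid_classes n w) = 1 \<or> card (comm_classes n w) = 1"
proof -
  define R where "R = reduced_words n w"
  define EB where "EB = EE braid_move R"
  define EC where "EC = EE comm_move R"
  have Bc: "braid_classes n w = R // EB"
    by (simp add: braid_classes_def move_classes_def R_def EB_def EE_def)
  have Cc: "comm_classes n w = R // EC"
    by (simp add: comm_classes_def move_classes_def R_def EC_def EE_def)
  have eB: "equiv R EB" unfolding EB_def by (rule equiv_EE) (rule braid_sym)
  have eC: "equiv R EC" unfolding EC_def by (rule equiv_EE) (rule comm_sym)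
  have fin: "finite R" unfolding R_def by (rule R_finite)
  have ne: "R \<noteq> {}" unfolding R_def by (rule R_nonempty[OF assms])
  have le1: "\<forall>b\<in>R//EB. \<forall>c\<in>R//EC. card (b \<inter> c) \<le> 1"
    using inter_le1[OF R_def] unfolding EB_def EC_def by blast
  have cnt: "card R = card (R//EB) * card (R//EC) \<longleftrightarrow> (\<forall>b\<in>R//EB. \<forall>c\<in>R//EC. b \<inter> c \<noteq> {})"
    by (rule count_classes[OF fin eB eC le1])
  have fB: "finite (R//EB)" using finite_quotient[OF fin equiv_type[OF eB]] .
  have fC: "finite (R//EC)" using finite_quotient[OF fin equiv_type[OF eC]] .
  have key: "(\<forall>b\<in>R//EB. \<forall>c\<in>R//EC. b \<inter> c \<noteq> {}) \<longleftrightarrow> card (R//EB) = 1 \<or> card (R//EC) = 1"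
  proof
    assume G: "\<forall>b\<in>R//EB. \<forall>c\<in>R//EC. b \<inter> c \<noteq> {}"
    show "card (R//EB) = 1 \<or> card (R//EC) = 1"
    proof (rule ccontr)
      assume "\<not> (card (R//EB) = 1 \<or> card (R//EC) = 1)"
      hence n1: "card (R//EB) \<noteq> 1" "card (R//EC) \<noteq> 1" by auto
      obtain c1 c2 where c12: "c1 \<in> R//EC" "c2 \<in> R//EC" "c1 \<noteq> c2"
        using two_elems[OF fC _ n1(2)] ne by auto
      obtain b1 b2 where b12: "b1 \<in> R//EB" "b2 \<in> R//EB" "b1 \<noteq> b2"
        using two_elems[OF fB _ n1(1)] ne by auto
      have hasB: "\<exists>v. braid_move u v" if uR: "u \<in> R" for u
      proof (rule ccontr)
        assume nb: "\<nexists>v. braid_move u v"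
        have "EB``{u} = {u}"
        proof
          show "EB``{u} \<subseteq> {u}"
          proof
            fix v assume "v \<in> EB``{u}"
            hence "braid_move\<^sup>*\<^sup>* u v" by (auto simp: EB_def EE_def)
            thus "v \<in> {u}" using nb by (cases rule: converse_rtranclpE) auto
          qed
          show "{u} \<subseteq> EB``{u}" using equiv_class_self[OF eB uR] by blast
        qed
        hence bu: "{u} \<in> R//EB" using quotientI[OF uR, of EB] by simp
        have "u \<in> c1" "u \<in> c2" using G bu c12 by blast+
        thus False using quotient_disj[OF eC c12(1) c12(2)] c12(3) by blast
      qed
      have hasC: "\<exists>v. comm_move u v" if uR: "u \<in> R" for u
      proof (rule ccontr)
        assume nb: "\<nexists>v. comm_move u v"
        have "EC``{u} = {u}"
        proof
          show "EC``{u} \<subseteq> {u}"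
          proof
            fix v assume "v \<in> EC``{u}"
            hence "comm_move\<^sup>*\<^sup>* u v" by (auto simp: EC_def EE_def)
            thus "v \<in> {u}" using nb by (cases rule: converse_rtranclpE) auto
          qed
          show "{u} \<subseteq> EC``{u}" using equiv_class_self[OF eC uR] by blast
        qed
        hence cu: "{u} \<in> R//EC" using quotientI[OF uR, of EC] by simp
        have "u \<in> b1" "u \<in> b2" using G cu b12 by blast+
        thus False using quotient_disj[OF eB b12(1) b12(2)] b12(3) by blast
      qed
      obtain u where uR: "u \<in> R" using ne by blast
      obtain x2 A B y2 where u2: "u = x2 @ [A, B, A] @ y2" and AB: "adjl A B"
        using hasB[OF uR] braid_adj by blast
      obtain x1 a b y1 where u1: "u = x1 @ [a, b] @ y1" and cab: "commute a b"
        using hasC[OF uR] comm_adj by blast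
      have cl: "\<And>x a b y. x @ [a, b] @ y \<in> R \<Longrightarrow> commute a b \<Longrightarrow> x @ [b, a] @ y \<in> R"
        unfolding R_def using comm_R comm_of by blast
      have na: "\<And>x a y. x @ [a, a] @ y \<notin> R" unfolding R_def by (rule noadj)
      have good: "goodL R \<or> goodR R"
        using decomp[OF u1[symmetric, THEN trans, OF u2] cab AB]
      proof (elim disjE exE conjE)
        fix mid assume "x2 = x1 @ [a, b] @ mid"
        hence "x1 @ [a, b] @ mid @ [A, B, A] @ y2 \<in> R" using uR u2 by simp
        thus ?thesis using gapL[OF cl na _ cab AB] by blast
      next
        assume "x2 = x1 @ [a]" "b = A"
        hence "x1 @ [a, A, B, A] @ y2 \<in> R" using uR u2 by simp
        thus ?thesis using cab AB \<open>b = A\<close> unfolding goodL_def by blast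
      next
        assume "x1 = x2 @ [A, B]" "a = A"
        hence "x2 @ [A, B, A, b] @ y1 \<in> R" using uR u1 by simp
        thus ?thesis using commute_sym[OF cab] AB \<open>a = A\<close> unfolding goodR_def by blast
      next
        fix mid assume "x1 = x2 @ [A, B, A] @ mid"
        hence "x2 @ [A, B, A] @ mid @ [a, b] @ y1 \<in> R" using uR u1 by simp
        thus ?thesis using gapR[OF cl na _ cab AB] by blast
      qed
      show False
        using good
      proof
        assume "goodL R"
        then obtain x c A B y where W1: "x @ [c, A, B, A] @ y \<in> R" and cA: "commute c A" and AB: "adjl A B"
          unfolding goodL_def by blast
        have W2: "x @ [A, c, B, A] @ y \<in> R"
          using cl[of x c A "[B, A] @ y"] W1 cA by simp
        have W3: "x @ [c, B, A, B] @ y \<in> R"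
          using braid_R[OF braid_of_adj[OF AB, of "x @ [c]" y]] W1 unfolding R_def by simp
        have "EB``{x @ [A, c, B, A] @ y} \<inter> EC``{x @ [c, B, A, B] @ y} \<noteq> {}"
          using G quotientI[OF W2, of EB] quotientI[OF W3, of EC] by blast
        then obtain z where "(x @ [A, c, B, A] @ y, z) \<in> EB" "(x @ [c, B, A, B] @ y, z) \<in> EC" by blast
        hence z: "z \<in> R" "braid_move\<^sup>*\<^sup>* (x @ [A, c, B, A] @ y) z" "comm_move\<^sup>*\<^sup>* (x @ [c, B, A, B] @ y) z"
          by (auto simp: EB_def EC_def EE_def)
        have "distinct (Tv z)" using z(1) unfolding R_def by (rule red_distinct)
        from conflictL[OF cA AB this z(2,3)] show False .
      next
        assume "goodR R"
        then obtain x c A B y where W1: "x @ [A, B, A, c] @ y \<in> R" and cA: "commute c A" and AB: "adjl A B"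
          unfolding goodR_def by blast
        have W2: "x @ [A, B, c, A] @ y \<in> R"
          using cl[of "x @ [A, B]" A c y] W1 commute_sym[OF cA] by simp
        have W3: "x @ [B, A, B, c] @ y \<in> R"
          using braid_R[OF braid_of_adj[OF AB, of x "c # y"]] W1 unfolding R_def by simp
        have "EB``{x @ [A, B, c, A] @ y} \<inter> EC``{x @ [B, A, B, c] @ y} \<noteq> {}"
          using G quotientI[OF W2, of EB] quotientI[OF W3, of EC] by blast
        then obtain z where "(x @ [A, B, c, A] @ y, z) \<in> EB" "(x @ [B, A, B, c] @ y, z) \<in> EC" by blast
        hence z: "z \<in> R" "braid_move\<^sup>*\<^sup>* (x @ [A, B, c, A] @ y) z" "comm_move\<^sup>*\<^sup>* (x @ [B, A, B, c] @ y) z"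
          by (auto simp: EB_def EC_def EE_def)
        have "distinct (Tv z)" using z(1) unfolding R_def by (rule red_distinct)
        from conflictR[OF cA AB this z(2,3)] show False .
      qed
    qed
  next
    assume "card (R//EB) = 1 \<or> card (R//EC) = 1"
    then show "\<forall>b\<in>R//EB. \<forall>c\<in>R//EC. b \<inter> c \<noteq> {}"
    proof
      assume "card (R//EB) = 1"
      then obtain b0 where b0: "R//EB = {b0}" by (rule card_1_singletonE)
      hence "b0 = R" using Union_quotient[OF eB] by simp
      show ?thesis
      proof (intro ballI)
        fix b c assume b: "b \<in> R//EB" and c: "c \<in> R//EC"
        have "b = R" using b b0 \<open>b0 = R\<close> by simp
        moreover have "c \<subseteq> R" "c \<noteq> {}"
          using in_quotient_imp_subset[OF eC c] in_quotient_imp_non_empty[OF eC c] by auto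
        ultimately show "b \<inter> c \<noteq> {}" by blast
      qed
    next
      assume "card (R//EC) = 1"
      then obtain c0 where c0: "R//EC = {c0}" by (rule card_1_singletonE)
      hence "c0 = R" using Union_quotient[OF eC] by simp
      show ?thesis
      proof (intro ballI)
        fix b c assume b: "b \<in> R//EB" and c: "c \<in> R//EC"
        have "c = R" using c c0 \<open>c0 = R\<close> by simp
        moreover have "b \<subseteq> R" "b \<noteq> {}"
          using in_quotient_imp_subset[OF eB b] in_quotient_imp_non_empty[OF eB b] by auto
        ultimately show "b \<inter> c \<noteq> {}" by blast
      qed
    qed
  qed
  show ?thesis unfolding Bc Cc R_def[symmetric] using cnt key by simp
qed

end
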